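(* Let $P$ be a finite poset, let $P'$ be a barycentric subdivision of $P$, and let $a,b,c,d\in P'$. If $a<c$, $b<d$, $(b,c)\in\mathrm{Diag}(P')$ and $(a,b),(d,c)\in\mathrm{Inc}(P')$, then $b,c\in P$. If, moreover, $(a,c),(b,d)\in\mathrm{Diag}(P')$ and $a<d$, then $a,d\in P$.
   Context: For a poset $Q$, $x\prec y$ means $x<y$ with no $z$ satisfying $x<z<y$; $\mathrm{Diag}(Q)$ is the set of such covering pairs $(x,y)$, and $\mathrm{Inc}(Q)$ is the set of pairs of incomparable elements. A barycentric subdivision $P'$ of (the diagram of) $P$ is obtained by adding finitely many (possibly zero) new vertices on each edge $(x,y)$ of $\mathrm{Diag}(P)$, the added vertices on an edge forming a chain strictly between $x$ and $y$; $P'$ carries the induced order and contains $P$ as a subposet. Each added vertex has a unique upper cover and a unique lower cover in $P'$. *)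

theory Defs
  imports Main
begin

definition poset_on :: "'a set \<Rightarrow> ('a \<Rightarrow> 'a \<Rightarrow> bool) \<Rightarrow> bool" where
  "poset_on P le \<longleftrightarrow>
     (\<forall>x\<in>P. le x x) \<and>
     (\<forall>x\<in>P. \<forall>y\<in>P. le x y \<and> le y x \<longrightarrow> x = y) \<and>
     (\<forall>x\<in>P. \<forall>y\<in>P. \<forall>z\<in>P. le x y \<and> le y z \<longrightarrow> le x z)"

definition strict :: "('a \<Rightarrow> 'a \<Rightarrow> bool) \<Rightarrow> 'a \<Rightarrow> 'a \<Rightarrow> bool" where
  "strict le x y \<longleftrightarrow> le x y \<and> x \<noteq> y"

definition Diag :: "'a set \<Rightarrow> ('a \<Rightarrow> 'a \<Rightarrow> bool) \<Rightarrow> ('a \<times> 'a) set" where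
  "Diag P le = {(x, y). x \<in> P \<and> y \<in> P \<and> strict le x y \<and>
                        \<not> (\<exists>z\<in>P. strict le x z \<and> strict le z y)}"

definition Inc :: "'a set \<Rightarrow> ('a \<Rightarrow> 'a \<Rightarrow> bool) \<Rightarrow> ('a \<times> 'a) set" where
  "Inc P le = {(x, y). x \<in> P \<and> y \<in> P \<and> \<not> le x y \<and> \<not> le y x}"

definition sub_step ::
  "'a set \<Rightarrow> ('a \<Rightarrow> 'a \<Rightarrow> bool) \<Rightarrow> ('a \<times> 'a \<Rightarrow> 'a list) \<Rightarrow> 'a \<Rightarrow> 'a \<Rightarrow> bool" where
  "sub_step P le sub x y \<longleftrightarrow>
     (\<exists>(u, v)\<in>Diag P le. \<exists>i. Suc i < length (u # sub (u, v) @ [v]) \<and>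
        (u # sub (u, v) @ [v]) ! i = x \<and> (u # sub (u, v) @ [v]) ! Suc i = y)"

text \<open>P' (with order le') is a barycentric subdivision of P (with order le): finitely many
  new vertices are placed on each edge of Diag P, forming a chain; P' carries the order
  induced by the subdivided diagram (reflexive-transitive closure of its edges).\<close>
definition barycentric_subdivision ::
  "'a set \<Rightarrow> ('a \<Rightarrow> 'a \<Rightarrow> bool) \<Rightarrow> 'a set \<Rightarrow> ('a \<Rightarrow> 'a \<Rightarrow> bool) \<Rightarrow> bool" where
  "barycentric_subdivision P le P' le' \<longleftrightarrow>
     (\<exists>sub :: 'a \<times> 'a \<Rightarrow> 'a list.
        (\<forall>e\<in>Diag P le. distinct (sub e) \<and> set (sub e) \<inter> P = {}) \<and>
        (\<forall>e1\<in>Diag P le. \<forall>e2\<in>Diag P le. e1 \<noteq> e2 \<longrightarrow> set (sub e1) \<inter> set (sub e2) = {}) \<and>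
        P' = P \<union> (\<Union>e\<in>Diag P le. set (sub e)) \<and>
        (\<forall>x y. le' x y \<longleftrightarrow> x \<in> P' \<and> y \<in> P' \<and> (sub_step P le sub)\<^sup>*\<^sup>* x y))"

end

theory Submission
  imports Defs
begin

lemma diag_mem: "(u, v) \<in> Diag P le \<Longrightarrow> u \<in> P \<and> v \<in> P \<and> u \<noteq> v"
  by (simp add: Diag_def strict_def)

lemma list_distinct_aux:
  assumes H1: "\<forall>e\<in>Diag P le. distinct (sub e) \<and> set (sub e) \<inter> P = {}"
    and e: "(u, v) \<in> Diag P le"
  shows "distinct (u # sub (u, v) @ [v])"
  using H1 e diag_mem[OF e] by auto

lemma edge_unique:
  assumes H1: "\<forall>e\<in>Diag P le. distinct (sub e) \<and> set (sub e) \<inter> P = {}"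
    and H2: "\<forall>e1\<in>Diag P le. \<forall>e2\<in>Diag P le. e1 \<noteq> e2 \<longrightarrow> set (sub e1) \<inter> set (sub e2) = {}"
    and x: "x \<in> set (sub e)" "e \<in> Diag P le"
    and e': "(u', v') \<in> Diag P le" "x \<in> set (u' # sub (u', v') @ [v'])"
  shows "(u', v') = e"
proof -
  have "x \<notin> P" using H1 x by auto
  moreover have "u' \<in> P" "v' \<in> P" using diag_mem[OF e'(1)] by auto
  ultimately have "x \<in> set (sub (u', v'))" using e'(2) by auto
  then show ?thesis using H2 x e'(1) by blast
qed

lemma succ_unique:
  assumes H1: "\<forall>e\<in>Diag P le. distinct (sub e) \<and> set (sub e) \<inter> P = {}"
    and H2: "\<forall>e1\<in>Diag P le. \<forall>e2\<in>Diag P le. e1 \<noteq> e2 \<longrightarrow> set (sub e1) \<inter> set (sub e2) = {}"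
    and x: "x \<in> set (sub e)" "e \<in> Diag P le"
  shows "\<exists>s. sub_step P le sub x s \<and> s \<noteq> x \<and> (\<forall>y. sub_step P le sub x y \<longrightarrow> y = s)"
proof -
  obtain u v where e: "e = (u, v)" by (cases e)
  define L where "L = u # sub (u, v) @ [v]"
  have dL: "distinct L" unfolding L_def using list_distinct_aux[OF H1] x e by blast
  obtain j where j: "j < length (sub e)" "sub e ! j = x" using x by (meson in_set_conv_nth)
  have Lx: "L ! Suc j = x" using j e unfolding L_def by (simp add: nth_append)
  define s where "s = L ! Suc (Suc j)"
  have len: "Suc (Suc j) < length L" using j e unfolding L_def by simp
  have st: "sub_step P le sub x s"
    unfolding sub_step_def using x e Lx len unfolding s_def L_def by fastforce
  have ne: "s \<noteq> x" unfolding s_def using Lx dL len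
    by (metis Suc_lessD n_not_Suc_n nth_eq_iff_index_eq)
  have "y = s" if "sub_step P le sub x y" for y
  proof -
    from that obtain u' v' i where e': "(u', v') \<in> Diag P le"
      and i: "Suc i < length (u' # sub (u', v') @ [v'])"
      "(u' # sub (u', v') @ [v']) ! i = x" "(u' # sub (u', v') @ [v']) ! Suc i = y"
      unfolding sub_step_def by blast
    have "x \<in> set (u' # sub (u', v') @ [v'])" using i by (metis Suc_lessD nth_mem)
    then have "(u', v') = e" using edge_unique[OF H1 H2 x e'(1)] by blast
    then have i2: "Suc i < length L" "L ! i = x" "L ! Suc i = y" using i e unfolding L_def by auto
    then have "i = Suc j" using Lx dL len by (metis Suc_lessD nth_eq_iff_index_eq)
    then show ?thesis using i2 s_def by simp
  qed
  then show ?thesis using st ne by blast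
qed

lemma pred_unique:
  assumes H1: "\<forall>e\<in>Diag P le. distinct (sub e) \<and> set (sub e) \<inter> P = {}"
    and H2: "\<forall>e1\<in>Diag P le. \<forall>e2\<in>Diag P le. e1 \<noteq> e2 \<longrightarrow> set (sub e1) \<inter> set (sub e2) = {}"
    and x: "x \<in> set (sub e)" "e \<in> Diag P le"
  shows "\<exists>p. sub_step P le sub p x \<and> p \<noteq> x \<and> (\<forall>y. sub_step P le sub y x \<longrightarrow> y = p)"
proof -
  obtain u v where e: "e = (u, v)" by (cases e)
  define L where "L = u # sub (u, v) @ [v]"
  have dL: "distinct L" unfolding L_def using list_distinct_aux[OF H1] x e by blast
  obtain j where j: "j < length (sub e)" "sub e ! j = x" using x by (meson in_set_conv_nth)
  have Lx: "L ! Suc j = x" using j e unfolding L_def by (simp add: nth_append)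
  define p where "p = L ! j"
  have len: "Suc j < length L" using j e unfolding L_def by simp
  have st: "sub_step P le sub p x"
    unfolding sub_step_def using x e Lx len unfolding p_def L_def by fastforce
  have ne: "p \<noteq> x" unfolding p_def using Lx dL len
    by (metis Suc_lessD n_not_Suc_n nth_eq_iff_index_eq)
  have "y = p" if "sub_step P le sub y x" for y
  proof -
    from that obtain u' v' i where e': "(u', v') \<in> Diag P le"
      and i: "Suc i < length (u' # sub (u', v') @ [v'])"
      "(u' # sub (u', v') @ [v']) ! i = y" "(u' # sub (u', v') @ [v']) ! Suc i = x"
      unfolding sub_step_def by blast
    have "x \<in> set (u' # sub (u', v') @ [v'])" using i by (metis nth_mem)
    then have "(u', v') = e" using edge_unique[OF H1 H2 x e'(1)] by blast
    then have i2: "Suc i < length L" "L ! i = y" "L ! Suc i = x" using i e unfolding L_def by auto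
    then have "i = j" using Lx dL len by (metis nat.inject nth_eq_iff_index_eq)
    then show ?thesis using i2 p_def by simp
  qed
  then show ?thesis using st ne by blast
qed

lemma step_in:
  assumes "sub_step P le sub x y"
  shows "x \<in> P \<union> (\<Union>e\<in>Diag P le. set (sub e)) \<and> y \<in> P \<union> (\<Union>e\<in>Diag P le. set (sub e))"
proof -
  from assms obtain u v i where e: "(u, v) \<in> Diag P le"
      and i: "Suc i < length (u # sub (u, v) @ [v])"
      "(u # sub (u, v) @ [v]) ! i = x" "(u # sub (u, v) @ [v]) ! Suc i = y"
      unfolding sub_step_def by blast
  have "x \<in> set (u # sub (u, v) @ [v])" "y \<in> set (u # sub (u, v) @ [v])"
    using i by (metis Suc_lessD nth_mem)+
  then show ?thesis using e diag_mem[OF e] by fastforce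
qed

theorem lemma1:
  fixes P P' :: "'a set" and le le' :: "'a \<Rightarrow> 'a \<Rightarrow> bool" and a b c d :: 'a
  assumes "finite P" and "poset_on P le"
    and "barycentric_subdivision P le P' le'"
    and "a \<in> P'" and "b \<in> P'" and "c \<in> P'" and "d \<in> P'"
    and "strict le' a c" and "strict le' b d"
    and "(b, c) \<in> Diag P' le'"
    and "(a, b) \<in> Inc P' le'" and "(d, c) \<in> Inc P' le'"
  shows "b \<in> P \<and> c \<in> P \<and>
         ((a, c) \<in> Diag P' le' \<and> (b, d) \<in> Diag P' le' \<and> strict le' a d \<longrightarrow> a \<in> P \<and> d \<in> P)"
proof -
  obtain sub where H1: "\<forall>e\<in>Diag P le. distinct (sub e) \<and> set (sub e) \<inter> P = {}"
    and H2: "\<forall>e1\<in>Diag P le. \<forall>e2\<in>Diag P le. e1 \<noteq> e2 \<longrightarrow> set (sub e1) \<inter> set (sub e2) = {}"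
    and P'd: "P' = P \<union> (\<Union>e\<in>Diag P le. set (sub e))"
    and le'd: "\<And>x y. le' x y \<longleftrightarrow> x \<in> P' \<and> y \<in> P' \<and> (sub_step P le sub)\<^sup>*\<^sup>* x y"
    using assms(3) unfolding barycentric_subdivision_def by blast
  let ?R = "sub_step P le sub"
  have inP': "x \<in> P' \<and> y \<in> P'" if "?R x y" for x y using step_in[OF that] unfolding P'd by blast
  have up: "\<exists>s. strict le' x s \<and> (\<forall>z. strict le' x z \<longrightarrow> le' s z)" if xx: "x \<in> P'" "x \<notin> P" for x
  proof -
    obtain e where e: "e \<in> Diag P le" "x \<in> set (sub e)" using xx P'd by blast
    obtain s where s: "?R x s" "s \<noteq> x" "\<forall>y. ?R x y \<longrightarrow> y = s"
      using succ_unique[OF H1 H2 e(2,1)] by blast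
    have sP: "x \<in> P'" "s \<in> P'" using inP'[OF s(1)] by auto
    have "le' x s" using le'd[of x s] sP s(1) by (simp add: r_into_rtranclp)
    then have "strict le' x s" using s(2) unfolding strict_def by simp
    moreover have "le' s z" if zz: "strict le' x z" for z
    proof -
      have zP: "z \<in> P'" using zz le'd[of x z] unfolding strict_def by simp
      have rz: "?R\<^sup>*\<^sup>* x z" "x \<noteq> z" using zz le'd[of x z] unfolding strict_def by simp_all
      from rz obtain y where y: "?R x y" "?R\<^sup>*\<^sup>* y z" by (cases rule: converse_rtranclpE) simp_all
      have "y = s" using s(3) y(1) by simp
      then show ?thesis using y(2) sP zP le'd[of s z] by simp
    qed
    ultimately show ?thesis by blast
  qed
  have down: "\<exists>p. strict le' p x \<and> (\<forall>z. strict le' z x \<longrightarrow> le' z p)" if xx: "x \<in> P'" "x \<notin> P" for x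
  proof -
    obtain e where e: "e \<in> Diag P le" "x \<in> set (sub e)" using xx P'd by blast
    obtain p where p: "?R p x" "p \<noteq> x" "\<forall>y. ?R y x \<longrightarrow> y = p"
      using pred_unique[OF H1 H2 e(2,1)] by blast
    have sP: "x \<in> P'" "p \<in> P'" using inP'[OF p(1)] by auto
    have "le' p x" using le'd[of p x] sP p(1) by (simp add: r_into_rtranclp)
    then have "strict le' p x" using p(2) unfolding strict_def by simp
    moreover have "le' z p" if zz: "strict le' z x" for z
    proof -
      have zP: "z \<in> P'" using zz le'd[of z x] unfolding strict_def by simp
      have rz: "?R\<^sup>*\<^sup>* z x" "z \<noteq> x" using zz le'd[of z x] unfolding strict_def by simp_all
      from rz obtain y where y: "?R y x" "?R\<^sup>*\<^sup>* z y" by (cases rule: rtranclp.cases) simp_all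
      have "y = p" using p(3) y(1) by simp
      then show ?thesis using y(2) sP zP le'd[of z p] by simp
    qed
    ultimately show ?thesis by blast
  qed
  have trans: "le' x z" if "le' x y" "le' y z" for x y z
    using that le'd by (meson rtranclp_trans)
  have refl: "le' x x" if "x \<in> P'" for x using that le'd by simp
  have Inc1: "\<not> le' a b" "\<not> le' b a" using assms(11) unfolding Inc_def by auto
  have Inc2: "\<not> le' d c" "\<not> le' c d" using assms(12) unfolding Inc_def by auto
  have cov: "\<And>x y z. (x, y) \<in> Diag P' le' \<Longrightarrow> strict le' x z \<Longrightarrow> le' z y \<Longrightarrow> z = y"
  proof -
    fix x y z assume h: "(x, y) \<in> Diag P' le'" "strict le' x z" "le' z y"
    have zP: "z \<in> P'" using h(3) le'd by blast
    have "\<not> (\<exists>w\<in>P'. strict le' x w \<and> strict le' w y)" using h(1) unfolding Diag_def by blast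
    then show "z = y" using zP h(2,3) unfolding strict_def by blast
  qed
  have bP: "b \<in> P"
  proof (rule ccontr)
    assume "b \<notin> P"
    then obtain s where s: "strict le' b s" "\<forall>z. strict le' b z \<longrightarrow> le' s z" using up assms(5) by blast
    have "strict le' b c" using assms(10) unfolding Diag_def by auto
    then have "le' s c" using s by blast
    then have "s = c" using cov[OF assms(10) s(1)] by blast
    then have "le' c d" using s assms(9) by blast
    then show False using Inc2 by blast
  qed
  have cP: "c \<in> P"
  proof (rule ccontr)
    assume "c \<notin> P"
    then obtain p where p: "strict le' p c" "\<forall>z. strict le' z c \<longrightarrow> le' z p" using down assms(6) by blast
    have bc: "strict le' b c" using assms(10) unfolding Diag_def by auto
    then have "le' b p" using p by blast
    have "b = p"
    proof (rule ccontr)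
      assume "b \<noteq> p"
      then have "strict le' b p" using \<open>le' b p\<close> unfolding strict_def by blast
      then have "p = c" using cov[OF assms(10)] p(1) unfolding strict_def by blast
      then show False using p(1) unfolding strict_def by blast
    qed
    then have "le' a b" using p assms(8) by blast
    then show False using Inc1 by blast
  qed
  have part2: "a \<in> P \<and> d \<in> P"
    if D1: "(a, c) \<in> Diag P' le'" and D2: "(b, d) \<in> Diag P' le'" and ad: "strict le' a d"
  proof
    show "a \<in> P"
    proof (rule ccontr)
      assume "a \<notin> P"
      then obtain s where s: "strict le' a s" "\<forall>z. strict le' a z \<longrightarrow> le' s z" using up assms(4) by blast
      have "le' s c" using s assms(8) by blast
      then have "s = c" using cov[OF D1 s(1)] by blast
      then have "le' c d" using s ad by blast
      then show False using Inc2 by blast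
    qed
    show "d \<in> P"
    proof (rule ccontr)
      assume "d \<notin> P"
      then obtain p where p: "strict le' p d" "\<forall>z. strict le' z d \<longrightarrow> le' z p" using down assms(7) by blast
      have "le' b p" using p assms(9) by blast
      have "b = p"
      proof (rule ccontr)
        assume "b \<noteq> p"
        then have "strict le' b p" using \<open>le' b p\<close> unfolding strict_def by blast
        then have "p = d" using cov[OF D2] p(1) unfolding strict_def by blast
        then show False using p(1) unfolding strict_def by blast
      qed
      then have "le' a b" using p ad by blast
      then show False using Inc1 by blast
    qed
  qed
  show ?thesis using bP cP part2 by blast
qed

end
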